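(* Let $\mathcal{G},\mathcal{H}$ be hypergraphs on a common vertex set with $r=\mathrm{rank}(\mathcal{H})$. Then $\mathcal{G}=\mathrm{Tr}(\mathcal{H})$ if and only if all three of the following hold: (1) $\mathcal{G}\subseteq\mathrm{Tr}(\mathcal{H})$; (2) $\mathrm{Tr}(\mathcal{G})|_r\subseteq\mathcal{H}$; (3) $\mathrm{rank}(\mathrm{Tr}(\mathcal{G}))\le r$.
   Context: $\mathrm{rank}(\mathcal{H})$ is the maximum edge size. $\mathrm{Tr}(\mathcal{H})$ is the set of inclusion-wise minimal hitting sets of $\mathcal{H}$ (sets meeting every edge, minimal under inclusion). $\mathrm{Tr}(\mathcal{G})|_r$ is the set of minimal hitting sets of $\mathcal{G}$ with at most $r$ vertices. Hypergraphs need not be Sperner (an edge may contain another). *)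

theory Defs
  imports Main
begin

text \<open>A hypergraph on vertex set V is a set of edges, each a subset of V
  (edges may contain each other; the empty edge is allowed).\<close>

definition hypergraph :: "'a set \<Rightarrow> 'a set set \<Rightarrow> bool" where
  "hypergraph V H \<longleftrightarrow> (\<forall>e\<in>H. e \<subseteq> V)"

definition rank :: "'a set set \<Rightarrow> nat" where
  "rank H = (if H = {} then 0 else Max (card ` H))"

definition hitting_set :: "'a set \<Rightarrow> 'a set set \<Rightarrow> 'a set \<Rightarrow> bool" where
  "hitting_set V H T \<longleftrightarrow> T \<subseteq> V \<and> (\<forall>e\<in>H. T \<inter> e \<noteq> {})"

definition Tr :: "'a set \<Rightarrow> 'a set set \<Rightarrow> 'a set set" where
  "Tr V H = {T. hitting_set V H T \<and> (\<forall>S. S \<subset> T \<longrightarrow> \<not> hitting_set V H S)}"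

definition restrict_rank :: "'a set set \<Rightarrow> nat \<Rightarrow> 'a set set" where
  "restrict_rank H r = {e\<in>H. card e \<le> r}"

end

theory Submission
  imports Defs
begin

lemma exists_min:
  assumes "finite V" "hitting_set V H X"
  shows "\<exists>T\<in>Tr V H. T \<subseteq> X"
  using assms(2)
proof (induction "card X" arbitrary: X rule: less_induct)
  case less
  show ?case
  proof (cases "\<forall>S. S \<subset> X \<longrightarrow> \<not> hitting_set V H S")
    case True then show ?thesis using less.prems by (auto simp: Tr_def)
  next
    case False
    then obtain S where S: "S \<subset> X" "hitting_set V H S" by blast
    have "finite X" using less.prems assms(1) unfolding hitting_set_def
      using finite_subset by blast
    then have "card S < card X" using S(1) psubset_card_mono by blast
    then obtain T where "T \<in> Tr V H" "T \<subseteq> S" using less.hyps S(2) by blast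
    then show ?thesis using S(1) by blast
  qed
qed

lemma compl_hits:
  assumes "hypergraph V H" "\<forall>e\<in>H. \<not> e \<subseteq> S"
  shows "hitting_set V H (V - S)"
  unfolding hitting_set_def
proof (intro conjI ballI)
  fix e assume e: "e \<in> H"
  then have "e \<subseteq> V" "\<not> e \<subseteq> S" using assms unfolding hypergraph_def by auto
  then show "(V - S) \<inter> e \<noteq> {}" by blast
qed auto

lemma trtr:
  assumes "finite V" "hypergraph V H" "S \<in> Tr V (Tr V H)"
  shows "S \<in> H"
proof -
  have hs: "hitting_set V (Tr V H) S" and mn: "\<forall>S'. S' \<subset> S \<longrightarrow> \<not> hitting_set V (Tr V H) S'"
    using assms(3) by (auto simp: Tr_def)
  have "\<exists>e\<in>H. e \<subseteq> S"
  proof (rule ccontr)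
    assume "\<not> ?thesis"
    then have "hitting_set V H (V - S)" using compl_hits assms(2) by blast
    then obtain T where "T \<in> Tr V H" "T \<subseteq> V - S" using exists_min assms(1) by blast
    then show False using hs unfolding hitting_set_def by blast
  qed
  then obtain e where e: "e \<in> H" "e \<subseteq> S" by blast
  have "\<forall>T\<in>Tr V H. T \<inter> e \<noteq> {}"
    using e(1) unfolding Tr_def hitting_set_def by blast
  moreover have "e \<subseteq> V" using e(1) assms(2) unfolding hypergraph_def by blast
  ultimately have "hitting_set V (Tr V H) e" unfolding hitting_set_def by blast
  then have "e = S" using mn e(2) by blast
  then show ?thesis using e by simp
qed

lemma rank_ge:
  assumes "finite V" "hypergraph V H" "e \<in> H"
  shows "card e \<le> rank H"
proof -
  have "H \<subseteq> Pow V" using assms(2) unfolding hypergraph_def by auto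
  then have "finite H" using assms(1) finite_subset by blast
  then show ?thesis using assms(3) unfolding rank_def by auto
qed

lemma rank_le:
  assumes "\<forall>e\<in>K. card e \<le> r" "finite K"
  shows "rank K \<le> r"
  using assms unfolding rank_def by auto

lemma Tr_hyper: "hypergraph V (Tr V H)"
  unfolding hypergraph_def Tr_def hitting_set_def by auto

lemma Tr_fin:
  assumes "finite V" shows "finite (Tr V H)"
proof -
  have "Tr V H \<subseteq> Pow V" unfolding Tr_def hitting_set_def by auto
  then show ?thesis using assms finite_subset by blast
qed

theorem lemma10:
  fixes V :: "'a set" and G H :: "'a set set"
  assumes "finite V" and "hypergraph V G" and "hypergraph V H"
    and "r = rank H"
  shows "G = Tr V H \<longleftrightarrow>
           (G \<subseteq> Tr V H \<and> restrict_rank (Tr V G) r \<subseteq> H \<and> rank (Tr V G) \<le> r)"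
proof
  assume G: "G = Tr V H"
  have inH: "\<And>S. S \<in> Tr V G \<Longrightarrow> S \<in> H" using trtr assms G by blast
  have "\<forall>e\<in>Tr V G. card e \<le> r" using inH rank_ge assms by blast
  then have "rank (Tr V G) \<le> r" using rank_le Tr_fin assms(1) by blast
  then show "G \<subseteq> Tr V H \<and> restrict_rank (Tr V G) r \<subseteq> H \<and> rank (Tr V G) \<le> r"
    using G inH unfolding restrict_rank_def by auto
next
  assume A: "G \<subseteq> Tr V H \<and> restrict_rank (Tr V G) r \<subseteq> H \<and> rank (Tr V G) \<le> r"
  have TG: "Tr V G \<subseteq> H"
  proof
    fix S assume S: "S \<in> Tr V G"
    have "card S \<le> rank (Tr V G)" using rank_ge[OF assms(1) Tr_hyper S] .
    then show "S \<in> H" using A S unfolding restrict_rank_def by auto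
  qed
  show "G = Tr V H"
  proof (rule ccontr)
    assume "G \<noteq> Tr V H"
    then obtain T where T: "T \<in> Tr V H" "T \<notin> G" using A by blast
    have "\<forall>g\<in>G. \<not> g \<subseteq> T"
    proof (intro ballI notI)
      fix g assume g: "g \<in> G" "g \<subseteq> T"
      then have "g \<in> Tr V H" using A by blast
      then have "hitting_set V H g" by (simp add: Tr_def)
      moreover have "g \<noteq> T" using g T by blast
      ultimately show False using T g unfolding Tr_def by blast
    qed
    then have "hitting_set V G (V - T)" using compl_hits assms(2) by blast
    then obtain S where "S \<in> Tr V G" "S \<subseteq> V - T" using exists_min assms(1) by blast
    then have "S \<in> H" "S \<inter> T = {}" using TG by auto
    then show False using T unfolding Tr_def hitting_set_def by blast
  qed
qed

end
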